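(* Fix $M$, integers $L,l$, and a job set $J$ with $L\ge D(J)$, and let $h$ be a hash function that is $(L,l)$-good for $J$. Then, for any choices of which eligible job to work on and for any greedy-enabled adversary, the algorithm GreedyWeakScheduler run on $J$ with parameters $L,l,h$ completes at least half of the jobs within $2Ll$ time steps.
   Context: Job-shop scheduling with unit jobs: machines $M$; jobs $J$ with sequences $\mathrm{seq}(j)\in M^*$, unique identifiers $\mathrm{ind}(j)\in I=\{1,\dots,|M|^c\}$, positions $\mathrm{pos}(j)_t\in\{0,\dots,\mathrm{len}(\mathrm{seq}(j))\}$ (completed at the last value) and states $\mathrm{state}(j)_t$; $\mathrm{que}(m)_t=\{j:\mathrm{seq}(j)_{\mathrm{pos}(j)_t}=m\}$; each step each machine works on at most one job in its queue, which advances one position. Greedy-enabled: each step, before the algorithm acts, an adversary knowing all positions and states may advance any jobs by arbitrary nonnegative amounts. $D(J)=\max_j\mathrm{len}(\mathrm{seq}(j))$. For $h:M^*\times I\to\{0,\dots,L-1\}$ with $h(j):=h(\mathrm{seq}(j),\mathrm{ind}(j))$: $\mathrm{virt}(j,i)=h(j)+i$ for $i<\mathrm{len}(\mathrm{seq}(j))$ and $\infty$ otherwise; $\mathrm{virt}(j)_t=\mathrm{virt}(j,\mathrm{pos}(j)_t)$. GreedyWeakScheduler$(m,L,l,h,t)$ at time $t$ (counted from the start of the subroutine): if $t=0$ set the states of all jobs in $\mathrm{que}(m)_t$ to $0$; let $T=\lfloor t/l\rfloor$, $Q=\{j\in\mathrm{que}(m)_t:\mathrm{virt}(j)_t=T,\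 \mathrm{state}(j)_t=0\}$; if $t\equiv0\pmod l$ and $|Q|>l$, set the states of all jobs in $Q$ to $1$; if $0<|Q|\le l$ work on an arbitrary $j\in Q$ (this is the choice of eligible job), else do nothing. Bad pattern (for fixed $M,L,l,J$): a collection of sets $B_{T,m}$, for $0\le T<2L$ and $m\in M$, of (job, sequence position) pairs such that $\mathrm{seq}(j)_i=m$ for all $(j,i)\in B_{T,m}$; each $j\in J$ appears at most once in $\bigsqcup B_{T,m}$; each $|B_{T,m}|\in\{0\}\cup(l,|J|]$; and $\sum|B_{T,m}|>|J|/2$. The bad pattern occurs for $h$ if $T=\mathrm{virt}(j,i)$ for all $(T,m)$ and all $(j,i)\in B_{T,m}$. The hash function $h$ is $(L,l)$-good for $J$ if no bad pattern (for $M,L,l,J$) occurs for $h$. *)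

theory Defs
  imports Main "HOL-Library.Extended_Nat"
begin

text \<open>Machines are the elements of a finite type 'm (so M = UNIV, |M| = CARD('m)).
  Jobs are elements of a finite set J of type 'j; seq j is the machine sequence of j,
  ind j its identifier. Positions are natural numbers; position length (seq j) means completed.\<close>

definition que :: "'j set \<Rightarrow> ('j \<Rightarrow> 'm list) \<Rightarrow> ('j \<Rightarrow> nat) \<Rightarrow> 'm \<Rightarrow> 'j set" where
  "que J seq pos m = {j \<in> J. pos j < length (seq j) \<and> seq j ! pos j = m}"

definition virt :: "('m list \<Rightarrow> nat \<Rightarrow> nat) \<Rightarrow> ('j \<Rightarrow> 'm list) \<Rightarrow> ('j \<Rightarrow> nat)
                     \<Rightarrow> 'j \<Rightarrow> nat \<Rightarrow> enat" where
  "virt h seq ind j i = (if i < length (seq j) then enat (h (seq j) (ind j) + i) else \<infinity>)"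

definition bad_pattern :: "nat \<Rightarrow> nat \<Rightarrow> 'j set \<Rightarrow> ('j \<Rightarrow> 'm::finite list)
                            \<Rightarrow> (nat \<Rightarrow> 'm \<Rightarrow> ('j \<times> nat) set) \<Rightarrow> bool" where
  "bad_pattern L l J seq B \<longleftrightarrow>
     (\<forall>T<2*L. \<forall>m. \<forall>(j,i)\<in>B T m. j \<in> J \<and> i < length (seq j) \<and> seq j ! i = m) \<and>
     (\<forall>T<2*L. \<forall>T'<2*L. \<forall>m m' j i i'. (j,i) \<in> B T m \<longrightarrow> (j,i') \<in> B T' m'
          \<longrightarrow> T = T' \<and> m = m' \<and> i = i') \<and>
     (\<forall>T<2*L. \<forall>m. card (B T m) = 0 \<or> (l < card (B T m) \<and> card (B T m) \<le> card J)) \<and>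
     2 * (\<Sum>T<2*L. \<Sum>m\<in>UNIV. card (B T m)) > card J"

definition bad_pattern_occurs :: "nat \<Rightarrow> ('m list \<Rightarrow> nat \<Rightarrow> nat) \<Rightarrow> ('j \<Rightarrow> 'm list)
                            \<Rightarrow> ('j \<Rightarrow> nat) \<Rightarrow> (nat \<Rightarrow> 'm \<Rightarrow> ('j \<times> nat) set) \<Rightarrow> bool" where
  "bad_pattern_occurs L h seq ind B \<longleftrightarrow>
     (\<forall>T<2*L. \<forall>m. \<forall>(j,i)\<in>B T m. virt h seq ind j i = enat T)"

definition good_hash :: "nat \<Rightarrow> nat \<Rightarrow> 'j set \<Rightarrow> ('j \<Rightarrow> 'm::finite list) \<Rightarrow> ('j \<Rightarrow> nat)
                          \<Rightarrow> ('m list \<Rightarrow> nat \<Rightarrow> nat) \<Rightarrow> bool" where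
  "good_hash L l J seq ind h \<longleftrightarrow>
     \<not> (\<exists>B. bad_pattern L l J seq B \<and> bad_pattern_occurs L h seq ind B)"

text \<open>The set Q of GreedyWeakScheduler for machine m at time t, where a t is the
  position assignment after the adversary's move at step t and s t the states
  at step t (before the algorithm's state update of that step).\<close>
definition gw_Q :: "'j set \<Rightarrow> ('j \<Rightarrow> 'm list) \<Rightarrow> ('j \<Rightarrow> nat) \<Rightarrow> ('m list \<Rightarrow> nat \<Rightarrow> nat) \<Rightarrow> nat
                    \<Rightarrow> (nat \<Rightarrow> 'j \<Rightarrow> nat) \<Rightarrow> (nat \<Rightarrow> 'j \<Rightarrow> nat) \<Rightarrow> 'm \<Rightarrow> nat \<Rightarrow> 'j set" where
  "gw_Q J seq ind h l a s m t =
     {j \<in> que J seq (a t) m. virt h seq ind j (a t j) = enat (t div l) \<and> s t j = 0}"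

text \<open>A run of GreedyWeakScheduler (on every machine) in the greedy-enabled model.
  p t : positions at the start of step t; a t : positions after the adversary's advance
  at step t; s t : job states used at step t; w t m : the job machine m works on at step t.
  Quantifying over all such runs covers all adversaries (adaptive ones included) and all
  choices of eligible job.\<close>
definition greedy_weak_run ::
  "'j set \<Rightarrow> ('j \<Rightarrow> 'm list) \<Rightarrow> ('j \<Rightarrow> nat) \<Rightarrow> ('m list \<Rightarrow> nat \<Rightarrow> nat) \<Rightarrow> nat
   \<Rightarrow> (nat \<Rightarrow> 'j \<Rightarrow> nat) \<Rightarrow> (nat \<Rightarrow> 'j \<Rightarrow> nat) \<Rightarrow> (nat \<Rightarrow> 'j \<Rightarrow> nat)
   \<Rightarrow> (nat \<Rightarrow> 'm \<Rightarrow> 'j option) \<Rightarrow> bool" where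
  "greedy_weak_run J seq ind h l p a s w \<longleftrightarrow>
     (\<forall>j\<in>J. p 0 j = 0) \<and>
     (\<forall>t. \<forall>j\<in>J. p t j \<le> a t j \<and> a t j \<le> length (seq j)) \<and>
     (\<forall>m. \<forall>j\<in>que J seq (a 0) m. s 0 j = 0) \<and>
     (\<forall>t m. let Q = gw_Q J seq ind h l a s m t in
        (if 0 < card Q \<and> card Q \<le> l then (\<exists>j\<in>Q. w t m = Some j) else w t m = None)) \<and>
     (\<forall>t. \<forall>j\<in>J. s (Suc t) j =
        (if t mod l = 0 \<and> (\<exists>m. j \<in> gw_Q J seq ind h l a s m t \<and> l < card (gw_Q J seq ind h l a s m t))
         then 1 else s t j)) \<and>
     (\<forall>t. \<forall>j\<in>J. p (Suc t) j = a t j + (if \<exists>m. w t m = Some j then 1 else 0))"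

end

theory Submission
  imports Defs
begin

lemma run_step:
  assumes "greedy_weak_run J seq ind h l p a s w" "j \<in> J"
  shows "p t j \<le> a t j" "a t j \<le> p (Suc t) j" "a t j \<le> length (seq j)"
  using assms unfolding greedy_weak_run_def by auto

lemma run_p_mono:
  assumes "greedy_weak_run J seq ind h l p a s w" "j \<in> J" "t \<le> t'"
  shows "p t j \<le> p t' j"
proof -
  have "mono (\<lambda>t. p t j)"
  proof (rule incseq_SucI)
    fix n show "p n j \<le> p (Suc n) j" using run_step(1,2)[OF assms(1,2), of n] by linarith
  qed
  then show ?thesis using assms(3) by (simp add: mono_def)
qed

lemma run_pa:
  assumes "greedy_weak_run J seq ind h l p a s w" "j \<in> J" "t \<le> t'"
  shows "p t j \<le> a t' j"
  using run_p_mono[OF assms] run_step(1)[OF assms(1,2)] order_trans by blast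

lemma run_ap:
  assumes "greedy_weak_run J seq ind h l p a s w" "j \<in> J" "t < t'"
  shows "a t j \<le> p t' j"
proof -
  have "p (Suc t) j \<le> p t' j" using run_p_mono[OF assms(1,2), of "Suc t" t'] assms(3) by simp
  then show ?thesis using run_step(2)[OF assms(1,2), of t] by linarith
qed

lemma run_s_step:
  assumes "greedy_weak_run J seq ind h l p a s w" "j \<in> J"
  shows "s (Suc t) j = (if t mod l = 0 \<and> (\<exists>m. j \<in> gw_Q J seq ind h l a s m t \<and> l < card (gw_Q J seq ind h l a s m t))
         then 1 else s t j)"
  using assms unfolding greedy_weak_run_def by auto

lemma run_s0:
  assumes "greedy_weak_run J seq ind h l p a s w" "j \<in> que J seq (a 0) m"
  shows "s 0 j = 0"
  using assms unfolding greedy_weak_run_def by auto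

lemma run_s_persist:
  assumes "greedy_weak_run J seq ind h l p a s w" "j \<in> J" "s t j \<noteq> 0" "t \<le> t'"
  shows "s t' j \<noteq> 0"
  using assms(4)
proof (induction t' rule: dec_induct)
  case base then show ?case using assms(3) by simp
next
  case (step n) then show ?case using run_s_step[OF assms(1,2), of n] by auto
qed

lemma run_p_suc:
  assumes "greedy_weak_run J seq ind h l p a s w" "j \<in> J"
  shows "p (Suc t) j = a t j + (if \<exists>m. w t m = Some j then 1 else 0)"
  using assms unfolding greedy_weak_run_def by auto

lemma run_w:
  assumes "greedy_weak_run J seq ind h l p a s w"
    "0 < card (gw_Q J seq ind h l a s m t)" "card (gw_Q J seq ind h l a s m t) \<le> l"
  shows "\<exists>j\<in>gw_Q J seq ind h l a s m t. w t m = Some j"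
  using assms unfolding greedy_weak_run_def Let_def by metis

lemma gwQ_sub: "gw_Q J seq ind h l a s m t \<subseteq> J"
  unfolding gw_Q_def que_def by auto

lemma first_change:
  fixes f :: "nat \<Rightarrow> nat"
  assumes "f 0 = 0" "f n \<noteq> 0"
  shows "\<exists>t<n. f t = 0 \<and> f (Suc t) \<noteq> 0"
  using assms
proof (induction n)
  case 0 then show ?case by simp
next
  case (Suc n) then show ?case by (cases "f n = 0") (auto intro: less_SucI)
qed

lemma count_le:
  fixes B :: "nat \<Rightarrow> 'm::finite \<Rightarrow> ('j \<times> nat) set"
  assumes fin: "\<And>T m. finite (B T m)"
    and sub: "X \<subseteq> fst ` (\<Union>T<2*L. \<Union>m. B T m)"
  shows "card X \<le> (\<Sum>T<2*L. \<Sum>m\<in>UNIV. card (B T m))"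
proof -
  have "card X \<le> card (fst ` (\<Union>T<2*L. \<Union>m. B T m))"
    by (rule card_mono) (use sub fin in auto)
  also have "\<dots> \<le> card (\<Union>T<2*L. \<Union>m. B T m)" by (rule card_image_le) (simp add: fin)
  also have "\<dots> \<le> (\<Sum>T<2*L. card (\<Union>m. B T m))" by (rule card_UN_le) simp
  also have "\<dots> \<le> (\<Sum>T<2*L. \<Sum>m\<in>UNIV. card (B T m))" by (intro sum_mono card_UN_le) simp
  finally show ?thesis .
qed

lemma finish:
  fixes B :: "nat \<Rightarrow> 'm::finite \<Rightarrow> ('j \<times> nat) set" and seq :: "'j \<Rightarrow> 'm list"
  assumes "finite J" "good_hash L l J seq ind h" "\<And>T m. finite (B T m)"
    and P1: "\<forall>T<2*L. \<forall>m. \<forall>(j,i)\<in>B T m. j \<in> J \<and> i < length (seq j) \<and> seq j ! i = m"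
    and P2: "\<forall>T<2*L. \<forall>T'<2*L. \<forall>m m' j i i'. (j,i) \<in> B T m \<longrightarrow> (j,i') \<in> B T' m'
          \<longrightarrow> T = T' \<and> m = m' \<and> i = i'"
    and P3: "\<forall>T<2*L. \<forall>m. card (B T m) = 0 \<or> (l < card (B T m) \<and> card (B T m) \<le> card J)"
    and occ: "bad_pattern_occurs L h seq ind B"
    and C: "C \<subseteq> J" "J - C \<subseteq> fst ` (\<Union>T<2*L. \<Union>m. B T m)"
  shows "card J \<le> 2 * card C"
proof (rule ccontr)
  assume "\<not> ?thesis"
  moreover have "card (J - C) = card J - card C" using C(1) assms(1) by (simp add: card_Diff_subset finite_subset)
  moreover have "card (J - C) \<le> (\<Sum>T<2*L. \<Sum>m\<in>UNIV. card (B T m))"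
    by (rule count_le[OF assms(3) C(2)])
  moreover have "card C \<le> card J" using C(1) assms(1) by (simp add: card_mono)
  ultimately have "2 * (\<Sum>T<2*L. \<Sum>m\<in>UNIV. card (B T m)) > card J" by linarith
  then have "bad_pattern L l J seq B" using P1 P2 P3 unfolding bad_pattern_def by blast
  then show False using occ assms(2) unfolding good_hash_def by blast
qed

lemma div_block:
  fixes T l t :: nat
  assumes "T * l \<le> t" "t < T * l + l"
  shows "t div l = T"
proof -
  have "0 < l" using assms by auto
  then show ?thesis using assms
    by (metis add.commute div_nat_eqI mult.commute mult_Suc_right)
qed

lemma inv_block:
  fixes seq :: "'j \<Rightarrow> 'm list"
  assumes run: "greedy_weak_run J seq ind h l p a s w" and finJ: "finite J" and lpos: "0 < l"
  shows "\<forall>j\<in>J. p (T*l) j < length (seq j) \<longrightarrow> s (T*l) j = 0 \<longrightarrow> T \<le> h (seq j) (ind j) + p (T*l) j"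
proof (induction T)
  case 0 then show ?case by simp
next
  case (Suc T)
  note IH = Suc.IH
  let ?Q = "gw_Q J seq ind h l a s"
  show ?case
  proof (intro ballI impI)
    fix j assume jJ: "j \<in> J" and plen: "p (Suc T * l) j < length (seq j)" and s0: "s (Suc T * l) j = 0"
    have le1: "T * l \<le> Suc T * l" by simp
    have sT: "s (T*l) j = 0" using run_s_persist[OF run jJ _ le1] s0 by blast
    have pm: "p (T*l) j \<le> p (Suc T * l) j" using run_p_mono[OF run jJ le1] .
    have ih: "T \<le> h (seq j) (ind j) + p (T*l) j" using IH jJ pm plen sT by auto
    show "Suc T \<le> h (seq j) (ind j) + p (Suc T * l) j"
    proof (rule ccontr)
      assume "\<not> ?thesis"
      then have eqT: "h (seq j) (ind j) + p (T*l) j = T" and peq: "p (Suc T * l) j = p (T*l) j"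
        using ih pm by auto
      define i where "i = p (T*l) j"
      define m where "m = seq j ! i"
      have at: "a t j = i" if "T*l \<le> t" "t < Suc T * l" for t
      proof -
        have "p (T*l) j \<le> a t j" using run_pa[OF run jJ that(1)] .
        moreover have "a t j \<le> p (Suc T * l) j" using run_ap[OF run jJ that(2)] .
        ultimately show ?thesis using peq i_def by simp
      qed
      have st: "s t j = 0" if "t \<le> Suc T * l" for t
        using run_s_persist[OF run jJ _ that] s0 by blast
      have jQ: "j \<in> ?Q m t" if "T*l \<le> t" "t < Suc T * l" for t
      proof -
        have "t div l = T" using div_block[of T l t] that by simp
        then show ?thesis using at[OF that] st[of t] that plen peq jJ eqT
          unfolding gw_Q_def que_def virt_def m_def i_def by auto
      qed
      have shrink: "k \<in> ?Q m t \<and> w t m \<noteq> Some k"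
        if t1: "T*l \<le> t" and t2: "Suc t < Suc T * l" and kQ: "k \<in> ?Q m (Suc t)" for t k
      proof -
        have kJ: "k \<in> J" and klen: "a (Suc t) k < length (seq k)" and km: "seq k ! a (Suc t) k = m"
          and kv: "h (seq k) (ind k) + a (Suc t) k = Suc t div l" and ks: "s (Suc t) k = 0"
          using kQ unfolding gw_Q_def que_def virt_def by auto
        have dv: "Suc t div l = T" "t div l = T" using div_block[of T l] t1 t2 by auto
        have skT: "s (T*l) k = 0" using run_s_persist[OF run kJ, of "T*l" "Suc t"] ks t1 by fastforce
        have skt: "s t k = 0" using run_s_persist[OF run kJ, of t "Suc t"] ks by fastforce
        have "p (T*l) k \<le> a t k" using run_pa[OF run kJ t1] .
        moreover have "a t k \<le> p (Suc t) k" using run_step(2)[OF run kJ] .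
        moreover have "p (Suc t) k \<le> a (Suc t) k" using run_step(1)[OF run kJ] .
        ultimately have "p (T*l) k < length (seq k)" using klen by linarith
        then have "T \<le> h (seq k) (ind k) + p (T*l) k" using IH kJ skT by auto
        then have eqs: "a t k = a (Suc t) k" "p (Suc t) k = a t k"
          using \<open>p (T*l) k \<le> a t k\<close> \<open>a t k \<le> p (Suc t) k\<close> \<open>p (Suc t) k \<le> a (Suc t) k\<close> kv dv by auto
        have "k \<in> ?Q m t" using kJ klen km kv dv skt eqs unfolding gw_Q_def que_def virt_def by auto
        moreover have "w t m \<noteq> Some k" using run_p_suc[OF run kJ, of t] eqs by (auto split: if_splits)
        ultimately show ?thesis by blast
      qed
      have finQ: "finite (?Q m t)" for t using finite_subset[OF gwQ_sub finJ] .
      have cardb: "card (?Q m (T*l + k)) \<le> l - k" if "k < l" for k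
        using that
      proof (induction k)
        case 0
        have "Suc (T*l) \<le> Suc T * l" using lpos by simp
        then have "s (Suc (T*l)) j = 0" using st by blast
        moreover have "(T*l) mod l = 0" by simp
        moreover have "j \<in> ?Q m (T*l)" using jQ[of "T*l"] lpos by simp
        ultimately show ?case using run_s_step[OF run jJ, of "T*l"] by (auto split: if_splits)
      next
        case (Suc k)
        then have c1: "card (?Q m (T*l + k)) \<le> l - k" by simp
        have "j \<in> ?Q m (T*l + k)" using jQ Suc.prems by simp
        then have "0 < card (?Q m (T*l + k))" using finQ card_gt_0_iff by blast
        then obtain j' where j'Q: "j' \<in> ?Q m (T*l + k)" and wj: "w (T*l + k) m = Some j'"
          using run_w[OF run] c1 by (metis diff_le_self order_trans)
        have "?Q m (T*l + Suc k) \<subseteq> ?Q m (T*l + k) - {j'}"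
          using shrink[of "T*l+k"] Suc.prems wj by auto
        then have "card (?Q m (T*l + Suc k)) \<le> card (?Q m (T*l + k) - {j'})"
          by (intro card_mono) (auto simp: finQ)
        also have "\<dots> = card (?Q m (T*l + k)) - 1" using j'Q finQ by simp
        finally show ?case using c1 by simp
      qed
      define t where "t = T*l + (l - 1)"
      have t1: "T*l \<le> t" "t < Suc T * l" and St: "Suc t = Suc T * l" using lpos by (auto simp: t_def)
      have c: "card (?Q m t) \<le> 1" using cardb[of "l-1"] lpos by (simp add: t_def)
      have jt: "j \<in> ?Q m t" using jQ t1 by blast
      then have "0 < card (?Q m t)" using finQ card_gt_0_iff by blast
      then obtain j' where j'Q: "j' \<in> ?Q m t" and wj: "w t m = Some j'"
        using run_w[OF run] c lpos by (metis One_nat_def Suc_leI le_trans)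
      have "j' = j" using c jt j'Q finQ[of t] by (metis One_nat_def card_le_Suc0_iff_eq)
      then have "p (Suc t) j = a t j + 1" using run_p_suc[OF run jJ, of t] wj by auto
      then show False using at[OF t1] peq St i_def by simp
    qed
  qed
qed

theorem lemma5p12:
  fixes J :: "'j set" and seq :: "'j \<Rightarrow> 'm::finite list" and ind :: "'j \<Rightarrow> nat"
    and h :: "'m list \<Rightarrow> nat \<Rightarrow> nat" and L l c :: nat
    and p a s :: "nat \<Rightarrow> 'j \<Rightarrow> nat" and w :: "nat \<Rightarrow> 'm \<Rightarrow> 'j option"
  assumes "finite J"
    and "inj_on ind J"
    and "\<forall>j\<in>J. ind j \<in> {1..card (UNIV :: 'm set) ^ c}"
    and "\<forall>xs i. i \<in> {1..card (UNIV :: 'm set) ^ c} \<longrightarrow> h xs i < L"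
    and "\<forall>j\<in>J. length (seq j) \<le> L"
    and "good_hash L l J seq ind h"
    and "greedy_weak_run J seq ind h l p a s w"
  shows "card J \<le> 2 * card {j \<in> J. p (2 * L * l) j = length (seq j)}"
proof -
  note run = assms(7)
  note finJ = assms(1)
  have hL: "h (seq j) (ind j) < L" if "j \<in> J" for j using assms(3,4) that by blast
  have lenL: "length (seq j) \<le> L" if "j \<in> J" for j using assms(5) that by blast
  let ?C = "{j \<in> J. p (2 * L * l) j = length (seq j)}"
  have CJ: "?C \<subseteq> J" by auto
  have plt: "p (2*L*l) j < length (seq j)" if "j \<in> J - ?C" for j
    using that run_step(1,3)[OF run, of j "2*L*l"] by fastforce
  show ?thesis
  proof (cases "l = 0")
    case True
    define B :: "nat \<Rightarrow> 'm \<Rightarrow> ('j \<times> nat) set" where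
      "B T m = (\<lambda>j. (j, 0)) ` {j \<in> J. 0 < length (seq j) \<and> h (seq j) (ind j) = T \<and> seq j ! 0 = m}" for T m
    have finB: "finite (B T m)" for T m unfolding B_def using finJ by (intro finite_imageI) (rule finite_subset[of _ J], auto)
    have cardB: "card (B T m) \<le> card J" for T m
    proof -
      have sub: "{j \<in> J. 0 < length (seq j) \<and> h (seq j) (ind j) = T \<and> seq j ! 0 = m} \<subseteq> J" by blast
      show ?thesis unfolding B_def
        using card_image_le[OF finite_subset[OF sub finJ], of "\<lambda>j. (j, 0::nat)"] card_mono[OF finJ sub] by linarith
    qed
    show ?thesis
    proof (rule finish[OF finJ assms(6) finB _ _ _ _ CJ])
      show "\<forall>T<2*L. \<forall>m. \<forall>(j,i)\<in>B T m. j \<in> J \<and> i < length (seq j) \<and> seq j ! i = m"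
        unfolding B_def by auto
      show "\<forall>T<2*L. \<forall>T'<2*L. \<forall>m m' j i i'. (j,i) \<in> B T m \<longrightarrow> (j,i') \<in> B T' m'
          \<longrightarrow> T = T' \<and> m = m' \<and> i = i'"
        unfolding B_def by auto
      show "\<forall>T<2*L. \<forall>m. card (B T m) = 0 \<or> (l < card (B T m) \<and> card (B T m) \<le> card J)"
        using cardB True by auto
      show "bad_pattern_occurs L h seq ind B"
        unfolding bad_pattern_occurs_def B_def virt_def by auto
      show "J - ?C \<subseteq> fst ` (\<Union>T<2*L. \<Union>m. B T m)"
      proof
        fix j assume j: "j \<in> J - ?C"
        then have "0 < length (seq j)" using plt by fastforce
        then have "(j, 0) \<in> B (h (seq j) (ind j)) (seq j ! 0)" using j unfolding B_def by auto
        moreover have "h (seq j) (ind j) < 2*L" using hL j by fastforce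
        ultimately show "j \<in> fst ` (\<Union>T<2*L. \<Union>m. B T m)" by force
      qed
    qed
  next
    case False
    then have lpos: "0 < l" by simp
    note inv = inv_block[OF run finJ lpos]
    let ?Q = "\<lambda>T m. gw_Q J seq ind h l a s m (T*l)"
    define B :: "nat \<Rightarrow> 'm \<Rightarrow> ('j \<times> nat) set" where
      "B T m = (if l < card (?Q T m) then (\<lambda>j. (j, a (T*l) j)) ` ?Q T m else {})" for T m
    have finQ: "finite (gw_Q J seq ind h l a s m t)" for m t using finite_subset[OF gwQ_sub finJ] .
    have finB: "finite (B T m)" for T m unfolding B_def using finQ by simp
    have memB: "j \<in> ?Q T m \<and> i = a (T*l) j \<and> l < card (?Q T m)" if "(j,i) \<in> B T m" for T m j i
      using that unfolding B_def by (auto split: if_splits)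
    show ?thesis
    proof (rule finish[OF finJ assms(6) finB _ _ _ _ CJ])
      show "\<forall>T<2*L. \<forall>m. \<forall>(j,i)\<in>B T m. j \<in> J \<and> i < length (seq j) \<and> seq j ! i = m"
      proof -
        have *: "j \<in> J \<and> i < length (seq j) \<and> seq j ! i = m" if "(j,i) \<in> B T m" for T m j i
          using memB[OF that] unfolding gw_Q_def que_def by blast
        show ?thesis
        proof (intro allI impI ballI)
          fix T m x assume "x \<in> B T m"
          then show "case x of (j,i) \<Rightarrow> j \<in> J \<and> i < length (seq j) \<and> seq j ! i = m"
            using * by (cases x) simp
        qed
      qed
      show "\<forall>T<2*L. \<forall>T'<2*L. \<forall>m m' j i i'. (j,i) \<in> B T m \<longrightarrow> (j,i') \<in> B T' m'
          \<longrightarrow> T = T' \<and> m = m' \<and> i = i'"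
      proof (intro allI impI)
        fix T T' m m' j i i'
        assume "T < 2*L" "T' < 2*L" and b1: "(j,i) \<in> B T m" and b2: "(j,i') \<in> B T' m'"
        have later: False if "(j,i) \<in> B T m" "(j,i') \<in> B T' m'" "T < T'" for T T' m m' i i'
        proof -
          note mb1 = memB[OF that(1)]
          note mb2 = memB[OF that(2)]
          have q1: "j \<in> ?Q T m" "l < card (?Q T m)"
            using conjunct1[OF mb1] conjunct2[OF conjunct2[OF mb1]] by simp_all
          have q2: "j \<in> ?Q T' m'"
            using conjunct1[OF mb2] by simp
          have jJ: "j \<in> J" using subsetD[OF gwQ_sub q1(1)] .
          have cond: "(T*l) mod l = 0 \<and> (\<exists>m. j \<in> gw_Q J seq ind h l a s m (T*l) \<and> l < card (gw_Q J seq ind h l a s m (T*l)))"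
          proof
            show "(T*l) mod l = 0" by simp
            show "\<exists>m. j \<in> gw_Q J seq ind h l a s m (T*l) \<and> l < card (gw_Q J seq ind h l a s m (T*l))"
              using q1 by (intro exI[where x=m] conjI)
          qed
          have "s (Suc (T*l)) j = 1" unfolding run_s_step[OF run jJ, of "T*l"] if_P[OF cond] ..
          then have s1: "s (Suc (T*l)) j \<noteq> 0" by simp
          have "Suc T * l \<le> T' * l" using that(3) by (intro mult_le_mono1) simp
          then have le: "Suc (T*l) \<le> T'*l" using lpos by simp
          have "s (T'*l) j \<noteq> 0" using run_s_persist[OF run jJ s1 le] .
          then show False using q2 unfolding gw_Q_def by auto
        qed
        have "T = T'"
        proof (rule linorder_cases[of T T'])
          assume "T < T'" then show ?thesis using later[OF b1 b2] by blast
        next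
          assume "T' < T" then show ?thesis using later[OF b2 b1] by blast
        qed
        then show "T = T' \<and> m = m' \<and> i = i'"
        proof -
          have "j \<in> ?Q T m" "i = a (T*l) j" using memB[OF b1] by simp_all
          moreover have "j \<in> ?Q T' m'" "i' = a (T'*l) j" using memB[OF b2] by simp_all
          ultimately show ?thesis using \<open>T = T'\<close> unfolding gw_Q_def que_def by auto
        qed
      qed
      show "\<forall>T<2*L. \<forall>m. card (B T m) = 0 \<or> (l < card (B T m) \<and> card (B T m) \<le> card J)"
      proof (intro allI impI)
        fix T m
        have "card (?Q T m) \<le> card J" using card_mono[OF finJ gwQ_sub] .
        moreover have "card ((\<lambda>j. (j, a (T*l) j)) ` ?Q T m) = card (?Q T m)"
          by (rule card_image) (simp add: inj_on_def)
        ultimately show "card (B T m) = 0 \<or> (l < card (B T m) \<and> card (B T m) \<le> card J)"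
          unfolding B_def by auto
      qed
      show "bad_pattern_occurs L h seq ind B"
      proof -
        have "virt h seq ind j i = enat T" if "(j,i) \<in> B T m" for T m j i
        proof -
          have "j \<in> ?Q T m" "i = a (T*l) j" using memB[OF that] by simp_all
          then show ?thesis using lpos unfolding gw_Q_def by simp
        qed
        then show ?thesis unfolding bad_pattern_occurs_def by fast
      qed
      show "J - ?C \<subseteq> fst ` (\<Union>T<2*L. \<Union>m. B T m)"
      proof
        fix j assume j: "j \<in> J - ?C"
        then have jJ: "j \<in> J" by simp
        have pl: "p (2*L*l) j < length (seq j)" using plt j by blast
        then have "0 < L" using lenL[OF jJ] by simp
        then have pos: "0 < 2*L*l" using lpos by simp
        have "s (2*L*l) j \<noteq> 0"
        proof
          assume "s (2*L*l) j = 0"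
          then have "2*L \<le> h (seq j) (ind j) + p (2*L*l) j" using bspec[OF inv[of "2*L"] jJ] pl by simp
          then show False using hL[OF jJ] lenL[OF jJ] pl by linarith
        qed
        moreover have "s 0 j = 0"
        proof -
          have "a 0 j \<le> p (2*L*l) j" using run_ap[OF run jJ pos] .
          then have "j \<in> que J seq (a 0) (seq j ! a 0 j)" using pl jJ unfolding que_def by auto
          then show ?thesis using run_s0[OF run] by blast
        qed
        ultimately obtain t where t: "t < 2*L*l" "s t j = 0" "s (Suc t) j \<noteq> 0"
          using first_change[of "\<lambda>t. s t j" "2*L*l"] by blast
        then obtain m where tm: "t mod l = 0" "j \<in> gw_Q J seq ind h l a s m t" "l < card (gw_Q J seq ind h l a s m t)"
        proof -
          have "t mod l = 0 \<and> (\<exists>m. j \<in> gw_Q J seq ind h l a s m t \<and> l < card (gw_Q J seq ind h l a s m t))"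
          proof (rule ccontr)
            assume "\<not> ?thesis"
            then have "s (Suc t) j = s t j" unfolding run_s_step[OF run jJ, of t] by (rule if_not_P)
            then show False using t(2,3) by simp
          qed
          then obtain m0 where "t mod l = 0" "j \<in> gw_Q J seq ind h l a s m0 t" "l < card (gw_Q J seq ind h l a s m0 t)"
            by (elim conjE exE) (rule that)
          then show ?thesis by (rule that)
        qed
        define T where "T = t div l"
        have tT: "t = T * l" using tm(1) T_def by (metis add_0 mod_div_mult_eq)
        have "T < 2*L" using t(1) tT lpos by (metis mult_less_cancel2)
        moreover have "(j, a (T*l) j) \<in> B T m"
        proof -
          have "j \<in> ?Q T m" "l < card (?Q T m)" using tm(2,3) tT by simp_all
          then show ?thesis unfolding B_def by simp
        qed
        ultimately show "j \<in> fst ` (\<Union>T<2*L. \<Union>m. B T m)" by force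
      qed
    qed
  qed
qed

end
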